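(* Fix $n\ge1$ and $\varepsilon>0$. If $f_1,f_2\in\mathrm{NN}_n$ satisfy $\mathrm{MSE}(f_i)\le R(\mathrm{NN}_n)+\varepsilon$ for $i\in\{1,2\}$, then \[ D(f_1,f_2)\le4\big(R(\mathrm{NN}_n)-R(\mathrm{NN}_{2n})+\varepsilon\big). \]
   Context: $P$ is a distribution on $\mathcal X\times\mathcal Y$ with $\mathcal X\subseteq\mathbb R^m$, $\mathcal Y\subseteq\mathbb R$; expectations are over $(x,y)\sim P$; $\mathrm{MSE}(f)=\mathbb E[(y-f(x))^2]$, $R(\mathcal F)=\inf_{f\in\mathcal F}\mathrm{MSE}(f)$, $D(f_1,f_2)=\mathbb E[(f_1(x)-f_2(x))^2]$. Let $\sigma(t)=\max\{0,t\}$. For $n\ge0$, $\mathrm{NN}_n$ is the class of real-valued functions on $\mathcal X$ computable by a finite directed acyclic graph with at most $n$ internal (non-input, non-output) nodes, where each internal node computes $\sigma(\langle w,u\rangle+b)$ for the vector $u$ of its inputs and some $w,b$, and the output node computes an affine combination of the input coordinates and the internal node values. *)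

theory Defs
  imports "HOL-Probability.Probability"
begin

definition relu :: "real \<Rightarrow> real" where
  "relu t = max 0 t"

text \<open>A ReLU network with internal nodes 0,1,...,k-1 listed in a topological order
  of the DAG. Internal node j sees the input coordinates (weights W j), the
  values of the earlier internal nodes i < j (weights V j i; a zero weight means
  no edge) and a bias B j. nodevals W V B x j is the list of the values of
  internal nodes 0..j-1 at input x.\<close>
fun nodevals :: "(nat \<Rightarrow> real^'m) \<Rightarrow> (nat \<Rightarrow> nat \<Rightarrow> real) \<Rightarrow> (nat \<Rightarrow> real)
                 \<Rightarrow> real^'m \<Rightarrow> nat \<Rightarrow> real list" where
  "nodevals W V B x 0 = []"
| "nodevals W V B x (Suc j) =
     (let h = nodevals W V B x j
      in h @ [relu (W j \<bullet> x + (\<Sum>i<j. V j i * h ! i) + B j)])"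

definition NN :: "nat \<Rightarrow> (real^'m \<Rightarrow> real) set" where
  "NN n = {f. \<exists>k\<le>n. \<exists>W V B (a::real^'m) (c::nat\<Rightarrow>real) (d::real).
              \<forall>x. f x = a \<bullet> x + (\<Sum>i<k. c i * nodevals W V B x k ! i) + d}"

definition MSE :: "((real^'m) \<times> real) measure \<Rightarrow> (real^'m \<Rightarrow> real) \<Rightarrow> real" where
  "MSE P f = (\<integral>z. (snd z - f (fst z))\<^sup>2 \<partial>P)"

definition Risk :: "((real^'m) \<times> real) measure \<Rightarrow> (real^'m \<Rightarrow> real) set \<Rightarrow> real" where
  "Risk P F = (INF f\<in>F. MSE P f)"

definition Dist :: "((real^'m) \<times> real) measure \<Rightarrow> (real^'m \<Rightarrow> real) \<Rightarrow> (real^'m \<Rightarrow> real) \<Rightarrow> real" where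
  "Dist P f1 f2 = (\<integral>z. (f1 (fst z) - f2 (fst z))\<^sup>2 \<partial>P)"

end

theory Submission
  imports Defs
begin

lemma length_nodevals[simp]: "length (nodevals W V B x j) = j"
  by (induction j) (auto simp: Let_def)

lemma sum_split_shift: "(\<Sum>i<k+t. f i) = (\<Sum>i<k. f i) + (\<Sum>s<t. f (k+s)) " for f :: "nat \<Rightarrow> real"
  by (induction t) (auto simp: add.assoc)

definition cW :: "nat \<Rightarrow> (nat \<Rightarrow> real^'m) \<Rightarrow> (nat \<Rightarrow> real^'m) \<Rightarrow> nat \<Rightarrow> real^'m" where
  "cW k1 W1 W2 j = (if j < k1 then W1 j else W2 (j - k1))"
definition cV :: "nat \<Rightarrow> (nat \<Rightarrow> nat \<Rightarrow> real) \<Rightarrow> (nat \<Rightarrow> nat \<Rightarrow> real) \<Rightarrow> nat \<Rightarrow> nat \<Rightarrow> real" where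
  "cV k1 V1 V2 j i = (if j < k1 then V1 j i else if i < k1 then 0 else V2 (j - k1) (i - k1))"
definition cB :: "nat \<Rightarrow> (nat \<Rightarrow> real) \<Rightarrow> (nat \<Rightarrow> real) \<Rightarrow> nat \<Rightarrow> real" where
  "cB k1 B1 B2 j = (if j < k1 then B1 j else B2 (j - k1))"

lemma nodevals_comb1:
  "j \<le> k1 \<Longrightarrow> nodevals (cW k1 W1 W2) (cV k1 V1 V2) (cB k1 B1 B2) x j = nodevals W1 V1 B1 x j"
proof (induction j)
  case 0 then show ?case by simp
next
  case (Suc j)
  then have "j < k1" by simp
  then show ?case using Suc by (simp add: Let_def cW_def cV_def cB_def)
qed

lemma nodevals_comb2:
  "nodevals (cW k1 W1 W2) (cV k1 V1 V2) (cB k1 B1 B2) x (k1 + t) =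
   nodevals W1 V1 B1 x k1 @ nodevals W2 V2 B2 x t"
proof (induction t)
  case 0 then show ?case using nodevals_comb1[of k1 k1] by simp
next
  case (Suc t)
  let ?h1 = "nodevals W1 V1 B1 x k1" and ?h2 = "nodevals W2 V2 B2 x t"
  have s: "(\<Sum>i<k1+t. cV k1 V1 V2 (k1+t) i * (?h1 @ ?h2) ! i) = (\<Sum>s<t. V2 t s * ?h2 ! s)"
    by (simp add: sum_split_shift cV_def nth_append)
  show ?case using Suc s by (simp add: Let_def cW_def cB_def)
qed

lemma NN_avg:
  assumes "f1 \<in> NN n" "f2 \<in> NN n"
  shows "(\<lambda>x. (f1 x + f2 x) / 2) \<in> NN (2 * n)"
proof -
  obtain k1 W1 V1 B1 a1 c1 d1 where k1: "k1 \<le> n" and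
    f1: "\<And>x. f1 x = a1 \<bullet> x + (\<Sum>i<k1. c1 i * nodevals W1 V1 B1 x k1 ! i) + d1"
    using assms(1) unfolding NN_def by blast
  obtain k2 W2 V2 B2 a2 c2 d2 where k2: "k2 \<le> n" and
    f2: "\<And>x. f2 x = a2 \<bullet> x + (\<Sum>i<k2. c2 i * nodevals W2 V2 B2 x k2 ! i) + d2"
    using assms(2) unfolding NN_def by blast
  define c where "c i = (if i < k1 then c1 i / 2 else c2 (i - k1) / 2)" for i
  have "\<forall>x. (f1 x + f2 x) / 2 = ((1/2) *\<^sub>R (a1 + a2)) \<bullet> x +
      (\<Sum>i<k1+k2. c i * nodevals (cW k1 W1 W2) (cV k1 V1 V2) (cB k1 B1 B2) x (k1+k2) ! i) + (d1+d2)/2"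
  proof
    fix x
    show "(f1 x + f2 x) / 2 = ((1/2) *\<^sub>R (a1 + a2)) \<bullet> x +
      (\<Sum>i<k1+k2. c i * nodevals (cW k1 W1 W2) (cV k1 V1 V2) (cB k1 B1 B2) x (k1+k2) ! i) + (d1+d2)/2"
      unfolding nodevals_comb2 f1 f2
      by (simp add: sum_split_shift c_def nth_append inner_add_left sum_divide_distrib[symmetric] field_simps)
  qed
  moreover have "k1 + k2 \<le> 2 * n" using k1 k2 by simp
  ultimately show ?thesis unfolding NN_def by blast
qed

theorem corollary2:
  fixes P :: "((real^'m) \<times> real) measure"
    and n :: nat and \<epsilon> :: real and f1 f2 :: "real^'m \<Rightarrow> real"
  assumes "prob_space P"
    and "sets P = sets borel"
    and "\<And>k f. f \<in> NN k \<Longrightarrow> integrable P (\<lambda>z. (snd z - f (fst z))\<^sup>2)"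
    and "n \<ge> 1" and "\<epsilon> > 0"
    and "f1 \<in> NN n" and "f2 \<in> NN n"
    and "MSE P f1 \<le> Risk P (NN n) + \<epsilon>"
    and "MSE P f2 \<le> Risk P (NN n) + \<epsilon>"
  shows "Dist P f1 f2 \<le> 4 * (Risk P (NN n) - Risk P (NN (2 * n)) + \<epsilon>)"
proof -
  define g where "g = (\<lambda>x. (f1 x + f2 x) / 2)"
  have gN: "g \<in> NN (2*n)" unfolding g_def using NN_avg assms(6,7) by blast
  have i1: "integrable P (\<lambda>z. (snd z - f1 (fst z))\<^sup>2)" using assms(3,6) by blast
  have i2: "integrable P (\<lambda>z. (snd z - f2 (fst z))\<^sup>2)" using assms(3,7) by blast
  have ig: "integrable P (\<lambda>z. (snd z - g (fst z))\<^sup>2)" using assms(3) gN by blast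
  have pw: "(\<lambda>z. (f1 (fst z) - f2 (fst z))\<^sup>2) = (\<lambda>z. 2 * (snd z - f1 (fst z))\<^sup>2 + 2 * (snd z - f2 (fst z))\<^sup>2 - 4 * (snd z - g (fst z))\<^sup>2)"
    by (rule ext) (simp add: g_def power2_eq_square field_simps)
  have D: "Dist P f1 f2 = 2 * MSE P f1 + 2 * MSE P f2 - 4 * MSE P g"
    unfolding Dist_def MSE_def pw using i1 i2 ig by simp
  have "bdd_below (MSE P ` NN (2*n))"
    by (rule bdd_belowI[of _ 0]) (auto simp: MSE_def)
  then have "Risk P (NN (2*n)) \<le> MSE P g" unfolding Risk_def using gN by (simp add: cINF_lower)
  then show ?thesis using D assms(8,9) by (simp add: algebra_simps)
qed

end
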